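(* Let $\rho_\chi(p,\pi/8)=p|\Psi_s\rangle\langle\Psi_s|+(1-p)\,|00\rangle\langle00|\otimes\tfrac{I_2}{2}$ with $|\Psi_s\rangle=\cos\frac{\pi}{8}|000\rangle+\sin\frac{\pi}{8}|111\rangle$. For diagonal filters $F_A=\mathrm{diag}(x,1)$, $F_B=\mathrm{diag}(y,1)$, $F_C=\mathrm{diag}(z,1)$ with $x,y,z>0$, let $\rho'=\frac1N(F_A\otimes F_B\otimes F_C)\rho_\chi(p,\pi/8)(F_A\otimes F_B\otimes F_C)^\dagger$, where $$N=\tfrac{2-\sqrt2}{4}p+\tfrac{1-p}{2}x^2y^2+\tfrac{2+\sqrt2 p}{4}x^2y^2z^2 .$$ Then the $3\times 9$ matrix $M'_{j,ik}=\mathrm{tr}[\rho'(\sigma_i\otimes\sigma_j\otimes\sigma_k)]$ has singular values $\frac{pxyz}{N},\frac{pxyz}{N},\frac{|D|}{N}$ with $D=-\tfrac{2-\sqrt2}{4}p-\tfrac{1-p}{2}x^2y^2+\tfrac{2+\sqrt2p}{4}x^2y^2z^2$; whenever $pxyz>|D|$, the maximum of $|\mathrm{tr}(\mathcal{S}\rho')|$ over Svetlichny operators equals $4pxyz/N$. Moreover, for every $p\in[0.3697,1]$ there exist $x,y,z>0$ such that $\rho'$ violates the Svetlichny inequality, i.e. $\max_{\mathcal{S}}|\mathrm{tr}(\mathcal{S}\rho')|>4$.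
   Context: $\sigma_1,\sigma_2,\sigma_3$ are the Pauli matrices, $I_2$ the $2\times2$ identity. For real unit vectors $\vec a,\vec a',\vec b,\vec b',\vec c,\vec c'\in\mathbb{R}^3$ let $A=\vec a\cdot\vec\sigma=\sum_k a_k\sigma_k$, and similarly $A',B,B',C,C'$. The Svetlichny operator is $$\mathcal{S}=A\otimes[(B+B')\otimes C+(B-B')\otimes C']+A'\otimes[(B-B')\otimes C-(B+B')\otimes C'],$$ and maxima are over all choices of the six unit vectors. A state violates the Svetlichny inequality if $|\mathrm{tr}(\mathcal{S}\rho)|>4$ for some such choice. *)

theory Defs
  imports "HOL-Analysis.Analysis" "HOL-Library.Multiset"
begin

text \<open>Qubit operators are complex 2x2 matrices indexed by type 2; basis state |0> is index 0,
  |1> is index 1. Multi-qubit operators are indexed by product types (Kronecker product).\<close>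

type_synonym qop = "complex^2^2"
type_synonym op3 = "complex^(2 \<times> 2 \<times> 2)^(2 \<times> 2 \<times> 2)"

definition kron :: "complex^'a^'a \<Rightarrow> complex^'b^'b \<Rightarrow> complex^('a \<times> 'b)^('a \<times> 'b)" where
  "kron A B = (\<chi> r c. A$(fst r)$(fst c) * B$(snd r)$(snd c))"

definition mtrace :: "complex^'n^'n \<Rightarrow> complex" where
  "mtrace M = (\<Sum>i\<in>UNIV. M$i$i)"

definition adjoint :: "complex^'n^'n \<Rightarrow> complex^'n^'n" where
  "adjoint M = (\<chi> i j. cnj (M$j$i))"

definition outer :: "complex^'n \<Rightarrow> complex^'n^'n" where
  "outer v = (\<chi> i j. v$i * cnj (v$j))"

definition pauli1 :: qop where
  "pauli1 = (\<chi> i j. if i \<noteq> j then 1 else 0)"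
definition pauli2 :: qop where
  "pauli2 = (\<chi> i j. if i = 0 \<and> j = 1 then - \<i> else if i = 1 \<and> j = 0 then \<i> else 0)"
definition pauli3 :: qop where
  "pauli3 = (\<chi> i j. if i = j then (if i = 0 then 1 else -1) else 0)"

text \<open>sigma indexed by type 3 with elements 1, 2, 3 (= 0).\<close>
definition sigma :: "3 \<Rightarrow> qop" where
  "sigma k = (if k = 1 then pauli1 else if k = 2 then pauli2 else pauli3)"

definition dot_sigma :: "real^3 \<Rightarrow> qop" where
  "dot_sigma a = (\<Sum>k\<in>UNIV. a$k *\<^sub>R sigma k)"

definition svetlichny_op ::
  "real^3 \<Rightarrow> real^3 \<Rightarrow> real^3 \<Rightarrow> real^3 \<Rightarrow> real^3 \<Rightarrow> real^3 \<Rightarrow> op3" where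
  "svetlichny_op a a' b b' c c' =
     (let A = dot_sigma a; A' = dot_sigma a'; B = dot_sigma b; B' = dot_sigma b';
          C = dot_sigma c; C' = dot_sigma c'
      in kron A (kron (B + B') C + kron (B - B') C')
       + kron A' (kron (B - B') C - kron (B + B') C'))"

definition svet_values :: "op3 \<Rightarrow> real set" where
  "svet_values \<rho> = {cmod (mtrace (svetlichny_op a a' b b' c c' ** \<rho>)) | a a' b b' c c'.
       norm a = 1 \<and> norm a' = 1 \<and> norm b = 1 \<and> norm b' = 1 \<and> norm c = 1 \<and> norm c' = 1}"

definition violates_svetlichny :: "op3 \<Rightarrow> bool" where
  "violates_svetlichny \<rho> \<longleftrightarrow> (\<exists>v\<in>svet_values \<rho>. v > 4)"

definition ket0 :: "complex^2" where "ket0 = (\<chi> i. if i = 0 then 1 else 0)"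

definition psi_s :: "complex^(2 \<times> 2 \<times> 2)" where
  "psi_s = (\<chi> i. if i = (0,0,0) then complex_of_real (cos (pi/8))
                 else if i = (1,1,1) then complex_of_real (sin (pi/8)) else 0)"

definition rho_chi :: "real \<Rightarrow> op3" where
  "rho_chi p = p *\<^sub>R outer psi_s
      + (1 - p) *\<^sub>R kron (outer ket0) (kron (outer ket0) ((1/2) *\<^sub>R mat 1))"

definition filt :: "real \<Rightarrow> qop" where
  "filt x = (\<chi> i j. if i = j then (if i = 0 then complex_of_real x else 1) else 0)"

definition normN :: "real \<Rightarrow> real \<Rightarrow> real \<Rightarrow> real \<Rightarrow> real" where
  "normN p x y z = (2 - sqrt 2)/4 * p + (1 - p)/2 * x^2 * y^2 + (2 + sqrt 2 * p)/4 * x^2 * y^2 * z^2"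

definition Dval :: "real \<Rightarrow> real \<Rightarrow> real \<Rightarrow> real \<Rightarrow> real" where
  "Dval p x y z = - (2 - sqrt 2)/4 * p - (1 - p)/2 * x^2 * y^2 + (2 + sqrt 2 * p)/4 * x^2 * y^2 * z^2"

definition rho_filtered :: "real \<Rightarrow> real \<Rightarrow> real \<Rightarrow> real \<Rightarrow> op3" where
  "rho_filtered p x y z =
     (let F = kron (filt x) (kron (filt y) (filt z))
      in (1 / normN p x y z) *\<^sub>R (F ** rho_chi p ** adjoint F))"

text \<open>Correlation matrix M_{j,ik} = tr[rho (sigma_i (x) sigma_j (x) sigma_k)], row j, column (i,k).
  (The trace is real for Hermitian rho; we take its real part.)\<close>
definition corr_matrix :: "op3 \<Rightarrow> real^(3 \<times> 3)^3" where
  "corr_matrix \<rho> = (\<chi> j c. Re (mtrace (\<rho> ** kron (sigma (fst c)) (kron (sigma j) (sigma (snd c))))))"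

text \<open>S is the multiset of singular values of the m x n matrix M (m \<le> n): the nonnegative square
  roots of the eigenvalues (with multiplicity) of M M^T, i.e. of the roots of its characteristic polynomial.\<close>
definition has_singular_values :: "real^'n^'m \<Rightarrow> real multiset \<Rightarrow> bool" where
  "has_singular_values M S \<longleftrightarrow> size S = CARD('m) \<and> (\<forall>s\<in>#S. s \<ge> 0) \<and>
     (\<forall>t. det (t *\<^sub>R (mat 1 :: real^'m^'m) - M ** transpose M) = (\<Prod>s\<in>#S. t - s^2))"

end

theory Submission
  imports Defs
begin


definition fv :: "real \<Rightarrow> 2 \<Rightarrow> real" where "fv x a = (if a = 0 then x else 1)"
definition fF :: "real \<Rightarrow> real \<Rightarrow> real \<Rightarrow> 2\<times>2\<times>2 \<Rightarrow> real" where
  "fF x y z r = fv x (fst r) * fv y (fst (snd r)) * fv z (snd (snd r))"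

lemma kron_filt: "kron (filt x) (kron (filt y) (filt z)) $ r $ t = (if r = t then complex_of_real (fF x y z r) else 0)"
  by (cases r; cases t) (auto simp: kron_def filt_def fF_def fv_def)

lemma sandwich: "(kron (filt x) (kron (filt y) (filt z)) ** R ** adjoint (kron (filt x) (kron (filt y) (filt z)))) $ r $ s
   = complex_of_real (fF x y z r) * R$r$s * complex_of_real (fF x y z s)"
proof -
  let ?F = "kron (filt x) (kron (filt y) (filt z))"
  have 1: "(?F ** R) $ r $ u = complex_of_real (fF x y z r) * R$r$u" for u
    unfolding matrix_matrix_mult_def by (simp add: kron_filt if_distrib[of "\<lambda>v. v * _"] cong: if_cong)
  show ?thesis
    unfolding matrix_matrix_mult_def[of "?F ** R"] by (simp add: 1 adjoint_def kron_filt if_distrib[of cnj] if_distrib[of "\<lambda>v. _ * v"] cong: if_cong)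
qed

lemma UNIV2: "(UNIV :: 2 set) = {0, 1}"
  using exhaust_2 by (metis UNIV_2 insert_commute num1_eq_iff zero_neq_one)




definition psr :: "2\<times>2\<times>2 \<Rightarrow> real" where
  "psr r = (if r = (0,0,0) then cos (pi/8) else if r = (1,1,1) then sin (pi/8) else 0)"

lemma two_cases: "(u::2) = 0 \<or> u = 1"
  using UNIV2 by auto

lemma ind_eq: "(fst (r::2\<times>2\<times>2) = 0 \<and> fst s = 0 \<and> fst (snd r) = 0 \<and> fst (snd s) = 0 \<and> snd (snd r) = snd (snd s))
   \<longleftrightarrow> (r = (0,0,0) \<and> s = (0,0,0)) \<or> (r = (0,0,1) \<and> s = (0,0,1))"
  using two_cases[of "snd (snd r)"] by (cases r; cases s) auto

lemma rho_chi_entry: "rho_chi p $ r $ s = complex_of_real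
   (p * psr r * psr s + (1 - p) * (if (r = (0,0,0) \<and> s = (0,0,0)) \<or> (r = (0,0,1) \<and> s = (0,0,1)) then 1/2 else 0))"
  unfolding ind_eq[symmetric] rho_chi_def vector_add_component vector_scaleR_component
  apply (simp add: kron_def vector_scaleR_component mat_def)
  apply (simp add: outer_def ket0_def psi_s_def psr_def scaleR_conv_of_real)
  done

lemma rho_entry: "rho_filtered p x y z $ r $ s = complex_of_real (1 / normN p x y z *
   (fF x y z r * (p * psr r * psr s + (1 - p) * (if (r = (0,0,0) \<and> s = (0,0,0)) \<or> (r = (0,0,1) \<and> s = (0,0,1)) then 1/2 else 0)) * fF x y z s))"
  unfolding rho_filtered_def Let_def vector_scaleR_component sandwich rho_chi_entry
  by (simp only: scaleR_conv_of_real of_real_mult[symmetric])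

definition spr where "spr p x y z j i =
     (if j = (0,0,0) \<and> i = (0,0,0) then ((p * cos (pi/8)^2 + (1-p)/2) * x^2*y^2*z^2 / normN p x y z) else 0)
   + (if j = (0,0,1) \<and> i = (0,0,1) then ((1-p)/2 * x^2*y^2 / normN p x y z) else 0)
   + (if j = (1,1,1) \<and> i = (1,1,1) then (p * sin (pi/8)^2 / normN p x y z) else 0)
   + (if j = (1,1,1) \<and> i = (0,0,0) then (p * cos (pi/8) * sin (pi/8) * x*y*z / normN p x y z) else 0)
   + (if j = (0,0,0) \<and> i = (1,1,1) then (p * cos (pi/8) * sin (pi/8) * x*y*z / normN p x y z) else 0)"

lemma spr_eq: "1 / normN p x y z *
   (fF x y z r * (p * psr r * psr s + (1 - p) * (if (r = (0,0,0) \<and> s = (0,0,0)) \<or> (r = (0,0,1) \<and> s = (0,0,1)) then 1/2 else 0)) * fF x y z s)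
  = spr p x y z r s"
proof -
  have c: "(r = (0,0,0) \<or> r = (0,0,1) \<or> r = (1,1,1)) \<or> (r \<noteq> (0,0,0) \<and> r \<noteq> (0,0,1) \<and> r \<noteq> (1,1,1))" for r :: "2\<times>2\<times>2" by blast
  show ?thesis
    using c[of r] c[of s]
    apply (elim disjE conjE)
    apply (simp_all add: spr_def psr_def fF_def fv_def power2_eq_square)
    apply (simp_all add: field_simps)
    done
qed

lemma rho_sparse: "rho_filtered p x y z $ j $ i =
     (if j = (0,0,0) \<and> i = (0,0,0) then complex_of_real ((p * cos (pi/8)^2 + (1-p)/2) * x^2*y^2*z^2 / normN p x y z) else 0)
   + (if j = (0,0,1) \<and> i = (0,0,1) then complex_of_real ((1-p)/2 * x^2*y^2 / normN p x y z) else 0)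
   + (if j = (1,1,1) \<and> i = (1,1,1) then complex_of_real (p * sin (pi/8)^2 / normN p x y z) else 0)
   + (if j = (1,1,1) \<and> i = (0,0,0) then complex_of_real (p * cos (pi/8) * sin (pi/8) * x*y*z / normN p x y z) else 0)
   + (if j = (0,0,0) \<and> i = (1,1,1) then complex_of_real (p * cos (pi/8) * sin (pi/8) * x*y*z / normN p x y z) else 0)"
  unfolding rho_entry spr_eq spr_def by simp

lemma dsum: "(\<Sum>i\<in>UNIV. \<Sum>j\<in>UNIV. (K::complex^'n^'n)$i$j * (if j = a \<and> i = b then v else 0)) = K$b$a * v"
proof -
  have "(\<Sum>j\<in>UNIV. K$i$j * (if j = a \<and> i = b then v else 0)) = (if i = b then K$b$a * v else 0)" for i
    by (cases "i = b") (auto simp: if_distrib[of "\<lambda>u. _ * u"] cong: if_cong)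
  then show ?thesis by simp
qed

definition "rr0 p x y z = (p * cos (pi/8)^2 + (1-p)/2) * x^2*y^2*z^2 / normN p x y z"
definition "rr1 p x y z = (1-p)/2 * x^2*y^2 / normN p x y z"
definition "rr7 p x y z = p * sin (pi/8)^2 / normN p x y z"
definition "rrc p x y z = p * cos (pi/8) * sin (pi/8) * x*y*z / normN p x y z"

lemma trace_formula: "mtrace (K ** rho_filtered p x y z) =
   K$(0,0,0)$(0,0,0) * complex_of_real (rr0 p x y z)
  + K$(0,0,1)$(0,0,1) * complex_of_real (rr1 p x y z)
  + K$(1,1,1)$(1,1,1) * complex_of_real (rr7 p x y z)
  + (K$(0,0,0)$(1,1,1) + K$(1,1,1)$(0,0,0)) * complex_of_real (rrc p x y z)"
  unfolding mtrace_def matrix_matrix_mult_def rr0_def rr1_def rr7_def rrc_def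
  by (simp only: vec_lambda_beta rho_sparse distrib_left sum.distrib dsum) (simp add: algebra_simps add_divide_distrib)


lemma ds_entries:
  "dot_sigma a $ 0 $ 0 = complex_of_real (a$3)"
  "dot_sigma a $ 0 $ 1 = complex_of_real (a$1) - \<i> * complex_of_real (a$2)"
  "dot_sigma a $ 1 $ 0 = complex_of_real (a$1) + \<i> * complex_of_real (a$2)"
  "dot_sigma a $ 1 $ 1 = - complex_of_real (a$3)"
  unfolding dot_sigma_def sum_3 vector_add_component vector_scaleR_component
  by (simp_all add: sigma_def pauli1_def pauli2_def pauli3_def scaleR_conv_of_real)

definition Eform :: "real \<Rightarrow> real \<Rightarrow> real^3 \<Rightarrow> real^3 \<Rightarrow> real^3 \<Rightarrow> real" where
  "Eform d al a b c = d * a$3*b$3*c$3 + al * (a$1*b$1*c$1 - a$1*b$2*c$2 - a$2*b$1*c$2 - a$2*b$2*c$1)"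

definition dd where "dd p x y z = rr0 p x y z - rr1 p x y z - rr7 p x y z"
definition al where "al p x y z = 2 * rrc p x y z"

lemma E_trace: "mtrace (kron (dot_sigma a) (kron (dot_sigma b) (dot_sigma c)) ** rho_filtered p x y z)
   = complex_of_real (Eform (dd p x y z) (al p x y z) a b c)"
  unfolding trace_formula
  apply (simp add: kron_def ds_entries)
  apply (simp add: complex_eq_iff)
  apply (simp add: Eform_def dd_def al_def algebra_simps)
  done

lemma ds_add: "dot_sigma (a + b) = dot_sigma a + dot_sigma b"
  unfolding dot_sigma_def by (simp add: scaleR_add_left sum.distrib)
lemma ds_diff: "dot_sigma (a - b) = dot_sigma a - dot_sigma b"
  unfolding dot_sigma_def by (simp add: scaleR_diff_left sum_subtractf)
lemma kron_add_right: "kron A (P + Q) = kron A P + kron A Q"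
  by (simp add: kron_def vec_eq_iff algebra_simps)
lemma kron_diff_right: "kron A (P - Q) = kron A P - kron A Q"
  by (simp add: kron_def vec_eq_iff algebra_simps)
lemma kron_add_left: "kron (P + Q) A = kron P A + kron Q A"
  by (simp add: kron_def vec_eq_iff algebra_simps)
lemma kron_diff_left: "kron (P - Q) A = kron P A - kron Q A"
  by (simp add: kron_def vec_eq_iff algebra_simps)
lemma mtrace_add: "mtrace ((P + Q) ** R) = mtrace (P ** R) + mtrace (Q ** R)"
  by (simp add: mtrace_def matrix_matrix_mult_def distrib_right sum.distrib)
lemma mtrace_diff: "mtrace ((P - Q) ** R) = mtrace (P ** R) - mtrace (Q ** R)"
  by (simp add: mtrace_def matrix_matrix_mult_def left_diff_distrib sum_subtractf)

definition Sform where "Sform d l a a' b b' c c' =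
   Eform d l a (b + b') c + Eform d l a (b - b') c' + Eform d l a' (b - b') c - Eform d l a' (b + b') c'"

lemma svet_trace: "mtrace (svetlichny_op a a' b b' c c' ** rho_filtered p x y z)
   = complex_of_real (Sform (dd p x y z) (al p x y z) a a' b b' c c')"
proof -
  have "svetlichny_op a a' b b' c c' =
     kron (dot_sigma a) (kron (dot_sigma (b+b')) (dot_sigma c)) + kron (dot_sigma a) (kron (dot_sigma (b-b')) (dot_sigma c'))
   + kron (dot_sigma a') (kron (dot_sigma (b-b')) (dot_sigma c)) - kron (dot_sigma a') (kron (dot_sigma (b+b')) (dot_sigma c'))"
    by (simp add: svetlichny_op_def Let_def ds_add ds_diff kron_add_right kron_diff_right algebra_simps)
  then show ?thesis
    by (simp add: mtrace_add mtrace_diff E_trace Sform_def)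
qed

lemma trig8: "cos (pi/8)^2 = (2 + sqrt 2)/4" "sin (pi/8)^2 = (2 - sqrt 2)/4" "cos (pi/8) * sin (pi/8) = sqrt 2 / 4"
proof -
  have a: "cos (pi/8)^2 - sin (pi/8)^2 = sqrt 2 / 2" using cos_double[of "pi/8"] cos_45 by simp
  have b: "2 * sin (pi/8) * cos (pi/8) = sqrt 2 / 2" using sin_double[of "pi/8"] sin_45 by simp
  have c: "cos (pi/8)^2 + sin (pi/8)^2 = 1" by simp
  have "cos (pi/8)^2 = ((cos (pi/8)^2 - sin (pi/8)^2) + (cos (pi/8)^2 + sin (pi/8)^2))/2" by (simp add: field_simps)
  also have "\<dots> = (sqrt 2/2 + 1)/2" by (simp only: a c)
  finally show "cos (pi/8)^2 = (2 + sqrt 2)/4" by (simp add: field_simps)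
  have "sin (pi/8)^2 = ((cos (pi/8)^2 + sin (pi/8)^2) - (cos (pi/8)^2 - sin (pi/8)^2))/2" by (simp add: field_simps)
  also have "\<dots> = (1 - sqrt 2/2)/2" by (simp only: a c)
  finally show "sin (pi/8)^2 = (2 - sqrt 2)/4" by (simp add: field_simps)
  show "cos (pi/8) * sin (pi/8) = sqrt 2 / 4" using b by (simp add: mult.commute)
qed

lemma dd_eq: "dd p x y z = Dval p x y z / normN p x y z"
proof -
  have num: "(p * cos (pi/8)^2 + (1-p)/2) * x^2*y^2*z^2 - (1-p)/2 * x^2*y^2 - p * sin (pi/8)^2 = Dval p x y z"
    unfolding Dval_def trig8 by (simp add: field_simps)
  show ?thesis unfolding dd_def rr0_def rr1_def rr7_def diff_divide_distrib[symmetric] by (simp only: num)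
qed

lemma al_eq: "al p x y z = p*x*y*z * (sqrt 2 / 2) / normN p x y z"
proof -
  have "2 * p * cos (pi/8) * sin (pi/8) * x*y*z = 2*p*x*y*z*(cos (pi/8) * sin (pi/8))" by (simp add: ac_simps)
  also have "\<dots> = p*x*y*z * (sqrt 2 / 2)" unfolding trig8(3) by simp
  finally have eq: "2 * p * cos (pi/8) * sin (pi/8) * x*y*z = p*x*y*z * (sqrt 2 / 2)" .
  have "al p x y z = 2 * p * cos (pi/8) * sin (pi/8) * x*y*z / normN p x y z" unfolding al_def rrc_def by simp
  then show ?thesis unfolding eq .
qed

lemma norm3: "norm (a::real^3) = sqrt (a$1^2 + a$2^2 + a$3^2)"
  by (simp add: norm_eq_sqrt_inner inner_vec_def sum_3 power2_eq_square)

lemma cs3: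
  fixes a1 a2 a3 X1 X2 X3 M :: real
  assumes "a1^2 + a2^2 + a3^2 = 1" "X1^2 + X2^2 + X3^2 \<le> M^2" "M \<ge> 0"
  shows "\<bar>a1*X1 + a2*X2 + a3*X3\<bar> \<le> M"
proof -
  have "(a1^2 + a2^2 + a3^2) * (X1^2 + X2^2 + X3^2) - (a1*X1 + a2*X2 + a3*X3)^2
      = (a1*X2-a2*X1)^2+(a1*X3-a3*X1)^2+(a2*X3-a3*X2)^2"
    by (simp add: power2_eq_square algebra_simps)
  moreover have "(a1*X2-a2*X1)^2+(a1*X3-a3*X1)^2+(a2*X3-a3*X2)^2 \<ge> 0" by simp
  ultimately have "(a1*X1 + a2*X2 + a3*X3)^2 \<le> (a1^2 + a2^2 + a3^2) * (X1^2 + X2^2 + X3^2)" by linarith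
  then have "(a1*X1 + a2*X2 + a3*X3)^2 \<le> M^2" using assms(1,2) by simp
  then show ?thesis using assms(3) abs_le_square_iff[of "a1*X1 + a2*X2 + a3*X3" M] by simp
qed



lemma sumsq9:
  fixes b1 b2 b3 f1 f2 f3 c1 c2 c3 g1 g2 g3 :: real
  assumes "b1^2+b2^2+b3^2 = 1" "f1^2+f2^2+f3^2 = 1" "c1^2+c2^2+c3^2 = 1" "g1^2+g2^2+g3^2 = 1"
  shows "((b1+f1)*c1 + (b1-f1)*g1)^2 + ((b1+f1)*c2 + (b1-f1)*g2)^2 + ((b1+f1)*c3 + (b1-f1)*g3)^2
       + ((b2+f2)*c1 + (b2-f2)*g1)^2 + ((b2+f2)*c2 + (b2-f2)*g2)^2 + ((b2+f2)*c3 + (b2-f2)*g3)^2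
       + ((b3+f3)*c1 + (b3-f3)*g1)^2 + ((b3+f3)*c2 + (b3-f3)*g2)^2 + ((b3+f3)*c3 + (b3-f3)*g3)^2 = 4"
proof -
  have "((b1+f1)*c1 + (b1-f1)*g1)^2 + ((b1+f1)*c2 + (b1-f1)*g2)^2 + ((b1+f1)*c3 + (b1-f1)*g3)^2
       + ((b2+f2)*c1 + (b2-f2)*g1)^2 + ((b2+f2)*c2 + (b2-f2)*g2)^2 + ((b2+f2)*c3 + (b2-f2)*g3)^2
       + ((b3+f3)*c1 + (b3-f3)*g1)^2 + ((b3+f3)*c2 + (b3-f3)*g2)^2 + ((b3+f3)*c3 + (b3-f3)*g3)^2
     = ((b1^2+b2^2+b3^2) + (f1^2+f2^2+f3^2))*((c1^2+c2^2+c3^2) + (g1^2+g2^2+g3^2))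
       + 2*(b1*f1+b2*f2+b3*f3)*((c1^2+c2^2+c3^2) - (g1^2+g2^2+g3^2))
       + 2*((b1^2+b2^2+b3^2) - (f1^2+f2^2+f3^2))*(c1*g1+c2*g2+c3*g3)"
    by (simp add: power2_eq_square algebra_simps)
  also have "\<dots> = 4" using assms by simp
  finally show ?thesis .
qed

lemma sq_diff_le: "(u - v)^2 \<le> 2*(u^2 + v^2)" for u v :: real
proof -
  have "2*(u^2+v^2) - (u-v)^2 = (u+v)^2" by (simp add: power2_eq_square algebra_simps)
  then show ?thesis by (smt (verit) zero_le_power2)
qed

lemma Xbound:
  fixes l d L v11 v12 v13 v21 v22 v23 v31 v32 v33 :: real
  assumes "2*l^2 = L^2" "d^2 \<le> L^2"
   "v11^2+v12^2+v13^2+v21^2+v22^2+v23^2+v31^2+v32^2+v33^2 = 4"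
  shows "(l*(v11 - v22))^2 + (-(l*(v12 + v21)))^2 + (d* v33)^2 \<le> (2*L)^2"
proof -
  have l2: "l^2 * 2 = L^2" using assms(1) by simp
  have 1: "(l*(v11 - v22))^2 \<le> L^2 * (v11^2 + v22^2)"
  proof -
    have "(l*(v11 - v22))^2 = l^2 * (v11 - v22)^2" by (simp add: power_mult_distrib)
    also have "\<dots> \<le> l^2 * (2*(v11^2+v22^2))" by (rule mult_left_mono[OF sq_diff_le]) simp
    also have "\<dots> = L^2 * (v11^2 + v22^2)" by (simp add: l2[symmetric] algebra_simps)
    finally show ?thesis .
  qed
  have 2: "(-(l*(v12 + v21)))^2 \<le> L^2 * (v12^2 + v21^2)"
  proof -
    have "(-(l*(v12 + v21)))^2 = l^2 * (v12 - (-v21))^2" by (simp add: power_mult_distrib)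
    also have "\<dots> \<le> l^2 * (2*(v12^2+(-v21)^2))" by (rule mult_left_mono[OF sq_diff_le]) simp
    also have "\<dots> = L^2 * (v12^2 + v21^2)" by (simp add: l2[symmetric] algebra_simps)
    finally show ?thesis .
  qed
  have 3: "(d* v33)^2 \<le> L^2 * v33^2"
    using assms(2) by (simp add: power_mult_distrib mult_right_mono)
  have 4: "L^2 * (v11^2 + v22^2) + L^2 * (v12^2 + v21^2) + L^2 * v33^2 \<le> L^2 * 4"
    using assms(3) by (simp only: assms(3)[symmetric] distrib_left[symmetric]) (rule mult_left_mono; simp)
  show ?thesis using 1 2 3 4 by (simp add: power_mult_distrib)
qed

lemma unit3: "norm (a::real^3) = 1 \<Longrightarrow> a$1^2 + a$2^2 + a$3^2 = 1"
  unfolding norm3 by simp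

lemma svet_bound:
  fixes a a' b b' c c' :: "real^3"
  assumes n: "norm a = 1" "norm a' = 1" "norm b = 1" "norm b' = 1" "norm c = 1" "norm c' = 1"
    and l: "2*l^2 = L^2" "d^2 \<le> L^2" "L \<ge> 0"
  shows "\<bar>Sform d l a a' b b' c c'\<bar> \<le> 4*L"
proof -
  note u = unit3[OF n(1)] unit3[OF n(2)] unit3[OF n(3)] unit3[OF n(4)] unit3[OF n(5)] unit3[OF n(6)]
  let ?v = "\<lambda>j k. (b$j+b'$j)*c$k + (b$j-b'$j)*c'$k"
  let ?w = "\<lambda>j k. (b$j+b'$j)*(-c'$k) + (b$j-b'$j)*c$k"
  have sv: "(?v 1 1)^2 + (?v 1 2)^2 + (?v 1 3)^2 + (?v 2 1)^2 + (?v 2 2)^2 + (?v 2 3)^2 + (?v 3 1)^2 + (?v 3 2)^2 + (?v 3 3)^2 = 4"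
    using sumsq9[OF u(3) u(4) u(5) u(6)] by simp
  have u6': "(- c'$1)^2 + (- c'$2)^2 + (- c'$3)^2 = 1" using u(6) by simp
  have sw: "(?w 1 1)^2 + (?w 1 2)^2 + (?w 1 3)^2 + (?w 2 1)^2 + (?w 2 2)^2 + (?w 2 3)^2 + (?w 3 1)^2 + (?w 3 2)^2 + (?w 3 3)^2 = 4"
    using sumsq9[OF u(3) u(4) u6' u(5)] by simp
  have xb: "(l*(?v 1 1 - ?v 2 2))^2 + (-(l*(?v 1 2 + ?v 2 1)))^2 + (d*?v 3 3)^2 \<le> (2*L)^2"
    by (rule Xbound[OF l(1) l(2)]) (use sv in simp)
  have yb: "(l*(?w 1 1 - ?w 2 2))^2 + (-(l*(?w 1 2 + ?w 2 1)))^2 + (d*?w 3 3)^2 \<le> (2*L)^2"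
    by (rule Xbound[OF l(1) l(2)]) (use sw in simp)
  have e1: "\<bar>a$1*(l*(?v 1 1 - ?v 2 2)) + a$2*(-(l*(?v 1 2 + ?v 2 1))) + a$3*(d*?v 3 3)\<bar> \<le> 2*L"
    by (rule cs3[OF u(1) xb]) (use l(3) in simp)
  have e2: "\<bar>a'$1*(l*(?w 1 1 - ?w 2 2)) + a'$2*(-(l*(?w 1 2 + ?w 2 1))) + a'$3*(d*?w 3 3)\<bar> \<le> 2*L"
    by (rule cs3[OF u(2) yb]) (use l(3) in simp)
  have S: "Sform d l a a' b b' c c' = (a$1*(l*(?v 1 1 - ?v 2 2)) + a$2*(-(l*(?v 1 2 + ?v 2 1))) + a$3*(d*?v 3 3))
     + (a'$1*(l*(?w 1 1 - ?w 2 2)) + a'$2*(-(l*(?w 1 2 + ?w 2 1))) + a'$3*(d*?w 3 3))"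
    by (simp add: Sform_def Eform_def algebra_simps)
  show ?thesis unfolding S using e1 e2 by linarith
qed



lemma achieve:
  fixes h :: real
  defines "h \<equiv> sqrt 2 / 2"
  shows "Sform d l (vector [1,0,0]) (vector [0,-1,0]) (vector [h,h,0]) (vector [h,-h,0]) (vector [1,0,0]) (vector [0,-1,0]) = 8*h*l"
    "norm (vector [1,0,0] :: real^3) = 1" "norm (vector [0,-1,0] :: real^3) = 1"
    "norm (vector [h,h,0] :: real^3) = 1" "norm (vector [h,-h,0] :: real^3) = 1"
proof -
  show "Sform d l (vector [1,0,0]) (vector [0,-1,0]) (vector [h,h,0]) (vector [h,-h,0]) (vector [1,0,0]) (vector [0,-1,0]) = 8*h*l"
    by (simp add: Sform_def Eform_def algebra_simps)
  have hh: "h^2 + h^2 = 1" unfolding h_def by (simp add: power_divide)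
  show "norm (vector [1,0,0] :: real^3) = 1" "norm (vector [0,-1,0] :: real^3) = 1"
    by (simp_all add: norm3)
  show "norm (vector [h,h,0] :: real^3) = 1" "norm (vector [h,-h,0] :: real^3) = 1"
    using hh by (simp_all add: norm3)
qed

lemma mtrace_comm: "mtrace (A ** B) = mtrace (B ** (A :: complex^'n^'n))"
  using trace_mul_sym[of A B] by (simp add: mtrace_def trace_def)

lemma sigma_axis: "sigma k = dot_sigma (axis k 1)"
  unfolding dot_sigma_def axis_def by (simp add: if_distrib[of "\<lambda>u. u *\<^sub>R _"] cong: if_cong)

lemma corr_entry: "corr_matrix (rho_filtered p x y z) $ j $ c =
   Eform (dd p x y z) (al p x y z) (axis (fst c) 1) (axis j 1) (axis (snd c) 1)"
  unfolding corr_matrix_def sigma_axis by (simp add: mtrace_comm[of "rho_filtered p x y z"] E_trace)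

lemma mm_entry: "((A::real^(3\<times>3)^3) ** transpose A)$j$j' = (\<Sum>i\<in>UNIV. \<Sum>k\<in>UNIV. A$j$(i,k) * A$j'$(i,k))"
  unfolding matrix_matrix_mult_def transpose_def vec_lambda_beta
  by (simp add: sum.cartesian_product UNIV_Times_UNIV)

lemma MMT: "corr_matrix (rho_filtered p x y z) ** transpose (corr_matrix (rho_filtered p x y z))
   = (\<chi> j j'. if j = j' then (if j = 3 then (dd p x y z)^2 else 2 * (al p x y z)^2) else 0)"
proof -
  have ax: "axis (1::3) (1::real) $ 1 = 1" "axis (1::3) (1::real) $ 2 = 0" "axis (1::3) (1::real) $ 3 = 0"
     "axis (2::3) (1::real) $ 1 = 0" "axis (2::3) (1::real) $ 2 = 1" "axis (2::3) (1::real) $ 3 = 0"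
     "axis (3::3) (1::real) $ 1 = 0" "axis (3::3) (1::real) $ 2 = 0" "axis (3::3) (1::real) $ 3 = 1"
    by (simp_all add: axis_def)
  have e: "corr_matrix (rho_filtered p x y z) $ j $ (i,k) = Eform (dd p x y z) (al p x y z) (axis i 1) (axis j 1) (axis k 1)" for i j k
    using corr_entry[of p x y z j "(i,k)"] by simp
  show ?thesis
    unfolding vec_eq_iff forall_3 mm_entry sum_3 e
    by (simp add: Eform_def ax power2_eq_square)
qed

lemma det_char: "det (t *\<^sub>R (mat 1 :: real^3^3) - corr_matrix (rho_filtered p x y z) ** transpose (corr_matrix (rho_filtered p x y z)))
   = (t - 2 * (al p x y z)^2) * (t - 2 * (al p x y z)^2) * (t - (dd p x y z)^2)"
  unfolding MMT det_3 by (simp add: mat_def)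



lemma sqrt2_bounds: "sqrt 2 > 1.414" "sqrt 2 < 3/2"
proof -
  show "sqrt 2 > 1.414" by (rule real_less_rsqrt) (simp add: power2_eq_square)
  show "sqrt 2 < 3/2"
  proof (rule ccontr)
    assume "\<not> sqrt 2 < 3/2"
    then have "(3/2)^2 \<le> (sqrt 2)^2" by (intro power_mono) auto
    then show False by (simp add: power2_eq_square)
  qed
qed

lemma normN_pos: assumes "0 \<le> p" "p \<le> 1" "x > 0" "y > 0" "z > 0" shows "normN p x y z > 0"
proof -
  have "(2 - sqrt 2)/4 * p \<ge> 0" using sqrt2_bounds assms by simp
  moreover have "(1 - p)/2 * x^2 * y^2 \<ge> 0" using assms by simp
  moreover have "(2 + sqrt 2 * p)/4 * x^2 * y^2 * z^2 > 0" using assms by (simp add: add_pos_nonneg)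
  ultimately show ?thesis unfolding normN_def by linarith
qed

lemma exist_viol:
  assumes p0: "0.3697 \<le> p" and p1: "p \<le> 1"
  shows "\<exists>x y z :: real. x > 0 \<and> y > 0 \<and> z > 0 \<and> normN p x y z < p*x*y*z"
proof -
  define A where "A = (2 - sqrt 2)/4"
  define B where "B = (1-p)/2"
  define C where "C = (2 + sqrt 2 * p)/4"
  define g where "g = p - 4*A*C"
  have s22: "sqrt 2 * (sqrt 2 * w) = 2 * w" for w by (simp add: mult.assoc[symmetric])
  have gexp: "g = 3/2*p - 1 + sqrt 2/2*(1-p)"
  proof -
    have "(2 - sqrt 2)*(2 + sqrt 2*p) = 4 + 2* sqrt 2*p - 2* sqrt 2 - 2*p" by (simp add: algebra_simps s22)
    moreover have "4 * ((2 - sqrt 2)/4) * ((2 + sqrt 2 * p)/4) = (2 - sqrt 2)*(2 + sqrt 2 * p)/4" by simp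
    ultimately have "g = p - (4 + 2* sqrt 2*p - 2* sqrt 2 - 2*p)/4" unfolding g_def A_def C_def by simp
    then show ?thesis by (simp add: field_simps)
  qed
  have s14: "sqrt 2 > 1414/1000" using sqrt2_bounds(1) by simp
  have "sqrt 2/2*(1-p) \<ge> 707/1000*(1-p)" using s14 p1 by (intro mult_right_mono) auto
  moreover have p0': "3697/10000 \<le> p" using p0 by simp
  ultimately have gpos: "g > 0" using gexp
  proof -
    fix T :: real
    have "\<And>T. 707/1000*(1-p) \<le> T \<Longrightarrow> 3697/10000 \<le> p \<Longrightarrow> 0 < 3/2*p - 1 + T" by (simp add: algebra_simps)
    then show ?thesis using \<open>sqrt 2/2*(1-p) \<ge> 707/1000*(1-p)\<close> p0' gexp by simp
  qed
  have Apos: "A > 0" using sqrt2_bounds by (simp add: A_def)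
  have Bnn: "B \<ge> 0" using p1 by (simp add: B_def)
  have Cpos: "C > 0" using p0 by (simp add: C_def add_pos_nonneg)
  define z where "z = sqrt ((4*A*B+1)/g)"
  have "4*A*B \<ge> 0" using Apos Bnn by simp
  then have q: "(4*A*B+1)/g > 0" using gpos by (intro divide_pos_pos) linarith+
  have zpos: "z > 0" using q by (simp add: z_def)
  have z2: "z^2 = (4*A*B+1)/g" using q by (simp add: z_def)
  have gz: "g * z^2 = 4*A*B+1" using gpos by (simp add: z2)
  define K where "K = B + C*z^2"
  have Kpos: "K > 0" using Bnn Cpos zpos by (simp add: K_def add_nonneg_pos)
  have key: "p*z^2 - 4*A*K = 1" using gz by (simp add: K_def g_def algebra_simps)
  define u where "u = p*z/(2*K)"
  have ppos: "p > 0" using p0 by simp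
  have upos: "u > 0" using ppos zpos Kpos by (simp add: u_def)
  have nN: "normN p u 1 z = A*p + K*u^2"
    by (simp add: normN_def A_def B_def C_def K_def algebra_simps)
  have "p*u*z - (A*p + K*u^2) = p*(p*z^2 - 4*A*K)/(4*K)"
    using Kpos by (simp add: u_def field_simps power2_eq_square)
  also have "\<dots> = p/(4*K)" by (simp add: key)
  also have "\<dots> > 0" using ppos Kpos by simp
  finally have "normN p u 1 z < p*u*1*z" using nN by simp
  then show ?thesis using upos zpos by (intro exI[of _ u] exI[of _ 1] exI[of _ z]) simp
qed

lemma al_sq: "2 * (al p x y z)^2 = (p*x*y*z / normN p x y z)^2"
  unfolding al_eq by (simp add: power_mult_distrib power_divide)

lemma achieve_val:
  "4 * (p*x*y*z / normN p x y z) \<in> svet_values (rho_filtered p x y z)" if "p*x*y*z / normN p x y z \<ge> 0"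
proof -
  define h :: real where "h = sqrt 2 / 2"
  note ac = achieve[folded h_def]
  have hl: "8 * h * al p x y z = 4 * (p*x*y*z / normN p x y z)"
    unfolding al_eq h_def by (simp add: field_simps)
  have "cmod (mtrace (svetlichny_op (vector [1,0,0]) (vector [0,-1,0]) (vector [h,h,0]) (vector [h,-h,0]) (vector [1,0,0]) (vector [0,-1,0]) ** rho_filtered p x y z))
     = 4 * (p*x*y*z / normN p x y z)"
    unfolding svet_trace ac(1) hl norm_of_real by (rule abs_of_nonneg) (use that in simp)
  then show ?thesis unfolding svet_values_def
    apply (rule_tac CollectI)
    apply (rule exI[of _ "vector [1,0,0]"], rule exI[of _ "vector [0,-1,0]"], rule exI[of _ "vector [h,h,0]"],
           rule exI[of _ "vector [h,-h,0]"], rule exI[of _ "vector [1,0,0]"], rule exI[of _ "vector [0,-1,0]"])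
    using ac(2-5) by simp
qed

lemma part1:
  assumes H: "0 \<le> p" "p \<le> 1" "x > 0" "y > 0" "z > 0"
  shows "has_singular_values (corr_matrix (rho_filtered p x y z))
              {# p*x*y*z / normN p x y z, p*x*y*z / normN p x y z, \<bar>Dval p x y z\<bar> / normN p x y z #}"
proof -
  have N: "normN p x y z > 0" using normN_pos[OF H] .
  have L0: "p*x*y*z / normN p x y z \<ge> 0" using H N by simp
  have D0: "\<bar>Dval p x y z\<bar> / normN p x y z \<ge> 0" using N by simp
  have dsq: "(dd p x y z)^2 = (\<bar>Dval p x y z\<bar> / normN p x y z)^2"
    unfolding dd_eq by (simp add: power_divide)
  show ?thesis unfolding has_singular_values_def
  proof (intro conjI allI ballI)
    show "size {# p*x*y*z / normN p x y z, p*x*y*z / normN p x y z, \<bar>Dval p x y z\<bar> / normN p x y z #} = CARD(3)" by simp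
  next
    fix s assume "s \<in># {# p*x*y*z / normN p x y z, p*x*y*z / normN p x y z, \<bar>Dval p x y z\<bar> / normN p x y z #}"
    then show "s \<ge> 0" using L0 D0 by auto
  next
    fix t
    show "det (t *\<^sub>R mat 1 - corr_matrix (rho_filtered p x y z) ** transpose (corr_matrix (rho_filtered p x y z))) =
      (\<Prod>s\<in>#{# p*x*y*z / normN p x y z, p*x*y*z / normN p x y z, \<bar>Dval p x y z\<bar> / normN p x y z #}. t - s^2)"
      unfolding det_char al_sq dsq by simp
  qed
qed

lemma part2:
  assumes H: "0 \<le> p" "p \<le> 1" "x > 0" "y > 0" "z > 0" and G: "p*x*y*z > \<bar>Dval p x y z\<bar>"
  shows "4*p*x*y*z / normN p x y z \<in> svet_values (rho_filtered p x y z)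
             \<and> (\<forall>v\<in>svet_values (rho_filtered p x y z). v \<le> 4*p*x*y*z / normN p x y z)"
proof
  have N: "normN p x y z > 0" using normN_pos[OF H] .
  have L0: "p*x*y*z / normN p x y z \<ge> 0" using H N by simp
  have e4: "4*p*x*y*z / normN p x y z = 4 * (p*x*y*z / normN p x y z)" by simp
  show "4*p*x*y*z / normN p x y z \<in> svet_values (rho_filtered p x y z)"
    unfolding e4 by (rule achieve_val[OF L0])
  show "\<forall>v\<in>svet_values (rho_filtered p x y z). v \<le> 4*p*x*y*z / normN p x y z"
  proof
    fix v assume "v \<in> svet_values (rho_filtered p x y z)"
    then obtain a a' b b' c c' where v: "v = cmod (mtrace (svetlichny_op a a' b b' c c' ** rho_filtered p x y z))"
      and n: "norm a = 1" "norm a' = 1" "norm b = 1" "norm b' = 1" "norm c = 1" "norm c' = 1"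
      unfolding svet_values_def by blast
    have "\<bar>dd p x y z\<bar> \<le> \<bar>p*x*y*z / normN p x y z\<bar>"
      unfolding dd_eq using G N by (simp add: divide_right_mono)
    then have dle: "(dd p x y z)^2 \<le> (p*x*y*z / normN p x y z)^2"
      by (subst abs_le_square_iff[symmetric])
    have "v = \<bar>Sform (dd p x y z) (al p x y z) a a' b b' c c'\<bar>"
      unfolding v svet_trace norm_of_real ..
    also have "\<dots> \<le> 4 * (p*x*y*z / normN p x y z)"
      by (rule svet_bound[OF n al_sq dle L0])
    finally show "v \<le> 4*p*x*y*z / normN p x y z" by simp
  qed
qed

lemma part3:
  assumes "0.3697 \<le> p" "p \<le> 1"
  shows "\<exists>x y z :: real. x > 0 \<and> y > 0 \<and> z > 0 \<and> violates_svetlichny (rho_filtered p x y z)"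
proof -
  obtain x y z :: real where xyz: "x > 0" "y > 0" "z > 0" and lt: "normN p x y z < p*x*y*z"
    using exist_viol[OF assms] by blast
  have p0: "0 \<le> p" using assms(1) by simp
  have N: "normN p x y z > 0" using normN_pos[OF p0 assms(2) xyz] .
  have L1: "p*x*y*z / normN p x y z > 1" using lt N by simp
  then have L0: "p*x*y*z / normN p x y z \<ge> 0" by simp
  have "violates_svetlichny (rho_filtered p x y z)"
    unfolding violates_svetlichny_def
    using achieve_val[OF L0] L1 by (intro bexI[of _ "4 * (p*x*y*z / normN p x y z)"]) auto
  then show ?thesis using xyz by blast
qed

theorem mainTheorem3:
  shows "(\<forall>p x y z :: real. 0 \<le> p \<and> p \<le> 1 \<and> x > 0 \<and> y > 0 \<and> z > 0 \<longrightarrow>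
            has_singular_values (corr_matrix (rho_filtered p x y z))
              {# p*x*y*z / normN p x y z, p*x*y*z / normN p x y z, \<bar>Dval p x y z\<bar> / normN p x y z #}
          \<and> (p*x*y*z > \<bar>Dval p x y z\<bar> \<longrightarrow>
               4*p*x*y*z / normN p x y z \<in> svet_values (rho_filtered p x y z)
             \<and> (\<forall>v\<in>svet_values (rho_filtered p x y z). v \<le> 4*p*x*y*z / normN p x y z)))
       \<and> (\<forall>p :: real. 0.3697 \<le> p \<and> p \<le> 1 \<longrightarrow>
            (\<exists>x y z :: real. x > 0 \<and> y > 0 \<and> z > 0 \<and> violates_svetlichny (rho_filtered p x y z)))"
proof (intro conjI allI impI)
  fix p x y z :: real
  assume H: "0 \<le> p \<and> p \<le> 1 \<and> x > 0 \<and> y > 0 \<and> z > 0"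
  then show "has_singular_values (corr_matrix (rho_filtered p x y z))
              {# p*x*y*z / normN p x y z, p*x*y*z / normN p x y z, \<bar>Dval p x y z\<bar> / normN p x y z #}"
    using part1 by blast
  assume G: "p*x*y*z > \<bar>Dval p x y z\<bar>"
  have P2: "4*p*x*y*z / normN p x y z \<in> svet_values (rho_filtered p x y z)
             \<and> (\<forall>v\<in>svet_values (rho_filtered p x y z). v \<le> 4*p*x*y*z / normN p x y z)"
    using H G part2 by blast
  then show "4*p*x*y*z / normN p x y z \<in> svet_values (rho_filtered p x y z)" by (rule conjunct1)
  from P2 show "\<forall>v\<in>svet_values (rho_filtered p x y z). v \<le> 4*p*x*y*z / normN p x y z" by (rule conjunct2)
next
  fix p :: real
  assume "0.3697 \<le> p \<and> p \<le> 1"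
  then show "\<exists>x y z :: real. x > 0 \<and> y > 0 \<and> z > 0 \<and> violates_svetlichny (rho_filtered p x y z)"
    using part3 by blast
qed


end
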